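(* For each $t\in\{0,1,\dots,T-1\}$ and $i\in\{1,\dots,N\}$: (i) for every $a\in\mathbb{Z}$, $\Delta G^{N,i}_t(a,k)=G^{N,i}_t(a+1,k)-G^{N,i}_t(a,k)$ is non-increasing in $k\in\mathbb{N}_0$; and (ii) for every $x\in\mathbb{Z}$, $\Delta\tilde V^{N,i}_t(x,k)=\tilde V^{N,i}_t(x+1,k)-\tilde V^{N,i}_t(x,k)$ is non-increasing in $k\in\mathbb{N}_0$.
   Context: Spare parts setting. Fix integers $N\ge1$, $T\ge1$, reals $\alpha_0,\beta_0>0$, and for each $i\in\{1,\dots,N\}$ unit costs $c_v^i,c_h^i,c_b^i>0$ (transportation, holding, backorder) with $c_b^i>c_v^i$. $\mathbb{N}_0=\{0,1,2,\dots\}$, $y^+=\max(y,0)$. For real $r>0$ and $p\in(0,1)$, $NB(r,p)$ is the distribution on $\mathbb{N}_0$ with $P(n)=\frac{\Gamma(n+r)}{\Gamma(r)n!}p^r(1-p)^n$; $NB(0,p)$ is the point mass at $0$. For $t\in\{0,\dots,T\}$ let $p_t=\frac{\beta_0+Nt}{\beta_0+Nt+1}$. At epoch $t$ and statistic $k$ let $Z\sim NB(\alpha_0+k,p_t)$, $K\sim NB((N-1)(\alpha_0+k),p_t)$ independent, and $C_i(a,x,k)=c_v^i(a-x)+c_h^i\mathbb{E}[(a-Z)^+]+c_b^i\mathbb{E}[(Z-a)^+]$. Define $\tilde V^{N,i}_T\equiv0$ and for $t=T-1,\dots,0$, $(x,k)\in\mathbb{Z}\times\mathbb{N}_0$: $\tilde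 V^{N,i}_t(x,k)=\min_{a\in\mathbb{Z},a\ge x}\{C_i(a,x,k)+\mathbb{E}[\tilde V^{N,i}_{t+1}(a-Z,k+Z+K)]\}$. For $t\in\{0,\dots,T-1\}$ let $G^{N,i}_t(a,k)=c_v^ia+c_h^i\mathbb{E}[(a-Z)^+]+c_b^i\mathbb{E}[(Z-a)^+]+\mathbb{E}[\tilde V^{N,i}_{t+1}(a-Z,k+Z+K)]$, so that $\tilde V^{N,i}_t(x,k)=\min_{a\ge x}\{G^{N,i}_t(a,k)-c_v^ix\}$. *)

theory Defs
  imports "HOL-Analysis.Analysis"
begin

definition nb_pmf :: "real \<Rightarrow> real \<Rightarrow> nat \<Rightarrow> real" where
  "nb_pmf r p n =
     (if r = 0 then (if n = 0 then 1 else 0)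
      else Gamma (real n + r) / (Gamma r * fact n) * p powr r * (1 - p) ^ n)"

definition nb_expect :: "real \<Rightarrow> real \<Rightarrow> (nat \<Rightarrow> real) \<Rightarrow> real" where
  "nb_expect r p f = (\<Sum>n. nb_pmf r p n * f n)"

definition p_t :: "nat \<Rightarrow> real \<Rightarrow> nat \<Rightarrow> real" where
  "p_t N beta0 t = (beta0 + real N * real t) / (beta0 + real N * real t + 1)"

definition G_stage ::
  "nat \<Rightarrow> real \<Rightarrow> real \<Rightarrow> real \<Rightarrow> real \<Rightarrow> real \<Rightarrow> nat \<Rightarrow> (int \<Rightarrow> nat \<Rightarrow> real) \<Rightarrow> int \<Rightarrow> nat \<Rightarrow> real"
  where
  "G_stage N alpha0 beta0 cv ch cb t Vnext a k =
     (let p = p_t N beta0 t; r = alpha0 + real k in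
        cv * real_of_int a
      + ch * nb_expect r p (\<lambda>z. max (real_of_int a - real z) 0)
      + cb * nb_expect r p (\<lambda>z. max (real z - real_of_int a) 0)
      + nb_expect r p (\<lambda>z. nb_expect ((real N - 1) * r) p
            (\<lambda>kk. Vnext (a - int z) (k + z + kk))))"

text \<open>Value function with m epochs remaining (epoch t = T - m).\<close>
primrec V_rem ::
  "nat \<Rightarrow> nat \<Rightarrow> real \<Rightarrow> real \<Rightarrow> real \<Rightarrow> real \<Rightarrow> real \<Rightarrow> nat \<Rightarrow> int \<Rightarrow> nat \<Rightarrow> real"
  where
  "V_rem N T alpha0 beta0 cv ch cb 0 x k = 0"
| "V_rem N T alpha0 beta0 cv ch cb (Suc m) x k =
     Inf {G_stage N alpha0 beta0 cv ch cb (T - Suc m) (V_rem N T alpha0 beta0 cv ch cb m) a k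
            - cv * real_of_int x | a. x \<le> a}"

definition Vtil ::
  "nat \<Rightarrow> nat \<Rightarrow> real \<Rightarrow> real \<Rightarrow> (nat \<Rightarrow> real) \<Rightarrow> (nat \<Rightarrow> real) \<Rightarrow> (nat \<Rightarrow> real) \<Rightarrow> nat \<Rightarrow> nat \<Rightarrow> int \<Rightarrow> nat \<Rightarrow> real"
  where
  "Vtil N T alpha0 beta0 cv ch cb i t x k =
     V_rem N T alpha0 beta0 (cv i) (ch i) (cb i) (T - t) x k"

definition Gfun ::
  "nat \<Rightarrow> nat \<Rightarrow> real \<Rightarrow> real \<Rightarrow> (nat \<Rightarrow> real) \<Rightarrow> (nat \<Rightarrow> real) \<Rightarrow> (nat \<Rightarrow> real) \<Rightarrow> nat \<Rightarrow> nat \<Rightarrow> int \<Rightarrow> nat \<Rightarrow> real"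
  where
  "Gfun N T alpha0 beta0 cv ch cb i t a k =
     G_stage N alpha0 beta0 (cv i) (ch i) (cb i) t (Vtil N T alpha0 beta0 cv ch cb i (Suc t)) a k"

end

theory Submission
  imports Defs
begin


lemma nb_pos_form:
  assumes "r > 0"
  shows "nb_pmf r p n = pochhammer r n / fact n * p powr r * (1 - p) ^ n"
proof -
  have "r \<notin> \<int>\<^sub>\<le>\<^sub>0" using assms by (auto elim!: nonpos_Ints_cases)
  hence "pochhammer r n = Gamma (r + of_nat n) / Gamma r" by (rule pochhammer_Gamma)
  moreover have "Gamma r \<noteq> 0" using Gamma_real_pos[OF assms] by simp
  ultimately show ?thesis using assms by (simp add: nb_pmf_def add.commute)
qed

lemma nb_nonneg:
  assumes "r \<ge> 0" "0 < p" "p < 1"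
  shows "nb_pmf r p n \<ge> 0"
proof (cases "r = 0")
  case True then show ?thesis by (simp add: nb_pmf_def)
next
  case False
  hence "r > 0" using assms by simp
  then show ?thesis using assms by (simp add: nb_pos_form pochhammer_pos less_imp_le)
qed

lemma nb_sums_1:
  assumes "r \<ge> 0" "0 < p" "p < 1"
  shows "(\<lambda>n. nb_pmf r p n) sums 1"
proof (cases "r = 0")
  case True
  then have "(\<lambda>n. nb_pmf r p n) = (\<lambda>n. if n = 0 then 1 else 0)" by (simp add: nb_pmf_def fun_eq_iff)
  then show ?thesis by (simp add: sums_single[of 0 "\<lambda>_. 1::real", simplified])
next
  case False
  hence r: "r > 0" using assms by simp
  have "\<bar>-(1-p)\<bar> < 1" using assms by simp
  from gen_binomial_real[OF this, of "-r"]
  have "(\<lambda>n. ((-r) gchoose n) * (-(1-p))^n) sums (p powr (-r))" by simp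
  also have "(\<lambda>n. ((-r) gchoose n) * (-(1-p))^n) = (\<lambda>n. pochhammer r n / fact n * (1-p)^n)"
    by (simp add: fun_eq_iff gbinomial_pochhammer power_mult_distrib[symmetric])
  finally have "(\<lambda>n. pochhammer r n / fact n * (1-p)^n * p powr r) sums (p powr (-r) * p powr r)"
    by (rule sums_mult2)
  also have "p powr (-r) * p powr r = 1" using assms by (simp add: powr_minus)
  finally show ?thesis using r by (simp add: nb_pos_form mult_ac)
qed

lemma nb_moment:
  assumes "r \<ge> 0" "0 < p" "p < 1"
  shows "(\<lambda>n. real n * nb_pmf r p n) sums (r * (1-p) / p)"
proof (cases "r = 0")
  case True
  then have "(\<lambda>n. real n * nb_pmf r p n) = (\<lambda>n. 0)" by (simp add: nb_pmf_def fun_eq_iff)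
  then show ?thesis using True by simp
next
  case False
  hence r: "r > 0" using assms by simp
  have eq: "real (Suc m) * nb_pmf r p (Suc m) = r * (1-p) / p * nb_pmf (r+1) p m" for m
  proof -
    have r1: "r + 1 > 0" using r by simp
    have fs: "(fact (Suc m) :: real) = real (Suc m) * fact m" by simp
    have fm: "(fact m :: real) > 0" by simp
    have "real (Suc m) * nb_pmf r p (Suc m)
       = real (Suc m) * (r * pochhammer (r+1) m) / (real (Suc m) * fact m) * p powr r * ((1-p) * (1-p)^m)"
      using r by (simp only: nb_pos_form pochhammer_rec fs power_Suc) (simp add: field_simps)
    also have "\<dots> = r * pochhammer (r+1) m / fact m * p powr r * ((1-p) * (1-p)^m)"
      by (simp del: of_nat_Suc)
    also have "\<dots> = r * (1-p) / p * nb_pmf (r+1) p m"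
      using r1 assms fm by (simp add: nb_pos_form powr_add field_simps)
    finally show ?thesis .
  qed
  have "(\<lambda>m. r * (1-p) / p * nb_pmf (r+1) p m) sums (r * (1-p) / p * 1)"
    by (rule sums_mult) (use nb_sums_1[of "r+1" p] assms in simp)
  hence "(\<lambda>m. real (Suc m) * nb_pmf r p (Suc m)) sums (r * (1-p) / p)" unfolding eq by simp
  then show ?thesis by (subst (asm) sums_Suc_iff) simp
qed

definition lin_bd :: "(nat \<Rightarrow> real) \<Rightarrow> bool" where
  "lin_bd f \<longleftrightarrow> (\<exists>A B. \<forall>n. \<bar>f n\<bar> \<le> A + B * real n)"

lemma lin_bdI: "(\<And>n. \<bar>f n\<bar> \<le> A + B * real n) \<Longrightarrow> lin_bd f"
  unfolding lin_bd_def by blast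

lemma lin_bd_const[simp]: "lin_bd (\<lambda>n. c)"
  by (rule lin_bdI[of _ "\<bar>c\<bar>" 0]) simp

lemma lin_bd_id[simp]: "lin_bd (\<lambda>n. real n)"
  by (rule lin_bdI[of _ 0 1]) simp

lemma lin_bd_add: "lin_bd f \<Longrightarrow> lin_bd g \<Longrightarrow> lin_bd (\<lambda>n. f n + g n)"
  unfolding lin_bd_def
proof (elim exE)
  fix A B A' B' assume f: "\<forall>n. \<bar>f n\<bar> \<le> A + B * real n" and g: "\<forall>n. \<bar>g n\<bar> \<le> A' + B' * real n"
  have "\<forall>n. \<bar>f n + g n\<bar> \<le> (A + A') + (B + B') * real n"
  proof
    fix n show "\<bar>f n + g n\<bar> \<le> (A + A') + (B + B') * real n"
      using f[rule_format, of n] g[rule_format, of n] by (simp add: algebra_simps abs_triangle_ineq order_trans[OF abs_triangle_ineq])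
  qed
  then show "\<exists>A B. \<forall>n. \<bar>f n + g n\<bar> \<le> A + B * real n" by blast
qed

lemma lin_bd_cmult: "lin_bd f \<Longrightarrow> lin_bd (\<lambda>n. c * f n)"
  unfolding lin_bd_def
proof (elim exE)
  fix A B assume f: "\<forall>n. \<bar>f n\<bar> \<le> A + B * real n"
  have "\<forall>n. \<bar>c * f n\<bar> \<le> (\<bar>c\<bar> * A) + (\<bar>c\<bar> * B) * real n"
  proof
    fix n show "\<bar>c * f n\<bar> \<le> (\<bar>c\<bar> * A) + (\<bar>c\<bar> * B) * real n"
      using mult_left_mono[OF f[rule_format, of n], of "\<bar>c\<bar>"] by (simp add: abs_mult algebra_simps)
  qed
  then show "\<exists>A B. \<forall>n. \<bar>c * f n\<bar> \<le> A + B * real n" by blast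
qed

lemma lin_bd_diff: "lin_bd f \<Longrightarrow> lin_bd g \<Longrightarrow> lin_bd (\<lambda>n. f n - g n)"
  using lin_bd_add[of f "\<lambda>n. (-1) * g n"] lin_bd_cmult[of g "-1"] by simp

lemma lin_bd_le: "lin_bd g \<Longrightarrow> (\<And>n. \<bar>f n\<bar> \<le> \<bar>g n\<bar>) \<Longrightarrow> lin_bd f"
  unfolding lin_bd_def by (meson order_trans)

locale nbp =
  fixes p :: real
  assumes p0: "0 < p" and p1: "p < 1"
begin

lemma summable_lin:
  assumes "r \<ge> 0" "lin_bd f"
  shows "summable (\<lambda>n. nb_pmf r p n * f n)"
proof -
  obtain A B where AB: "\<And>n. \<bar>f n\<bar> \<le> A + B * real n" using assms(2) unfolding lin_bd_def by blast
  have s1: "summable (\<lambda>n. nb_pmf r p n)" using nb_sums_1[OF assms(1) p0 p1] by (simp add: sums_iff)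
  have s2: "summable (\<lambda>n. real n * nb_pmf r p n)" using nb_moment[OF assms(1) p0 p1] by (simp add: sums_iff)
  have "summable (\<lambda>n. A * nb_pmf r p n + B * (real n * nb_pmf r p n))"
    by (intro summable_add summable_mult s1 s2)
  moreover have "norm (nb_pmf r p n * f n) \<le> A * nb_pmf r p n + B * (real n * nb_pmf r p n)" for n
    using mult_left_mono[OF AB[of n] nb_nonneg[OF assms(1) p0 p1, of n]]
    by (simp add: abs_mult nb_nonneg[OF assms(1) p0 p1] algebra_simps)
  ultimately show ?thesis by (rule summable_comparison_test') 
qed

lemma E_sums: "r \<ge> 0 \<Longrightarrow> lin_bd f \<Longrightarrow> (\<lambda>n. nb_pmf r p n * f n) sums nb_expect r p f"
  unfolding nb_expect_def by (rule summable_sums[OF summable_lin])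

lemma E_const: "r \<ge> 0 \<Longrightarrow> nb_expect r p (\<lambda>n. c) = c"
  unfolding nb_expect_def using sums_mult2[OF nb_sums_1[OF _ p0 p1], of r c] by (simp add: sums_iff)

lemma E_id: "r \<ge> 0 \<Longrightarrow> nb_expect r p (\<lambda>n. real n) = r * (1-p) / p"
  unfolding nb_expect_def using nb_moment[OF _ p0 p1, of r] by (simp add: sums_iff mult.commute)

lemma E_add: "r \<ge> 0 \<Longrightarrow> lin_bd f \<Longrightarrow> lin_bd g \<Longrightarrow>
   nb_expect r p (\<lambda>n. f n + g n) = nb_expect r p f + nb_expect r p g"
  using sums_add[OF E_sums[of r f] E_sums[of r g]] unfolding nb_expect_def
  by (simp add: sums_iff distrib_left)

lemma E_diff: "r \<ge> 0 \<Longrightarrow> lin_bd f \<Longrightarrow> lin_bd g \<Longrightarrow>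
   nb_expect r p (\<lambda>n. f n - g n) = nb_expect r p f - nb_expect r p g"
  using sums_diff[OF E_sums[of r f] E_sums[of r g]] unfolding nb_expect_def
  by (simp add: sums_iff right_diff_distrib)

lemma E_cmult: "r \<ge> 0 \<Longrightarrow> lin_bd f \<Longrightarrow> nb_expect r p (\<lambda>n. c * f n) = c * nb_expect r p f"
  unfolding nb_expect_def using suminf_mult[OF summable_lin[of r f], of c] by (simp add: mult_ac)

lemma E_mono: "r \<ge> 0 \<Longrightarrow> lin_bd f \<Longrightarrow> lin_bd g \<Longrightarrow> (\<And>n. f n \<le> g n) \<Longrightarrow>
   nb_expect r p f \<le> nb_expect r p g"
  unfolding nb_expect_def
  by (intro suminf_le summable_lin mult_left_mono nb_nonneg p0 p1) auto

lemma E_nonneg: "r \<ge> 0 \<Longrightarrow> lin_bd f \<Longrightarrow> (\<And>n. 0 \<le> f n) \<Longrightarrow> 0 \<le> nb_expect r p f"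
  using E_mono[of r "\<lambda>_. 0" f] E_const[of r 0] by simp

lemma E_le_const: "r \<ge> 0 \<Longrightarrow> lin_bd f \<Longrightarrow> (\<And>n. f n \<le> c) \<Longrightarrow> nb_expect r p f \<le> c"
  using E_mono[of r f "\<lambda>_. c"] E_const[of r c] by simp

lemma E_ge_const: "r \<ge> 0 \<Longrightarrow> lin_bd f \<Longrightarrow> (\<And>n. c \<le> f n) \<Longrightarrow> c \<le> nb_expect r p f"
  using E_mono[of r "\<lambda>_. c" f] E_const[of r c] by simp

lemma E_le_lin: "r \<ge> 0 \<Longrightarrow> lin_bd f \<Longrightarrow> (\<And>n. f n \<le> A + B * real n) \<Longrightarrow>
   nb_expect r p f \<le> A + B * (r * (1-p) / p)"
proof -
  assume r: "r \<ge> 0" and f: "lin_bd f" and le: "\<And>n. f n \<le> A + B * real n"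
  have "nb_expect r p f \<le> nb_expect r p (\<lambda>n. A + B * real n)"
    by (rule E_mono[OF r f _ le]) (intro lin_bd_add lin_bd_cmult lin_bd_const lin_bd_id)
  also have "\<dots> = A + B * (r * (1-p) / p)"
    using r by (simp add: E_add lin_bd_cmult E_const E_cmult E_id)
  finally show ?thesis .
qed

lemma nb_succ: "r > 0 \<Longrightarrow> nb_pmf (r+1) p n = nb_pmf r p n * (p * (r + real n) / r)"
proof -
  assume r: "r > 0"
  have "pochhammer r (Suc n) = r * pochhammer (r+1) n" by (rule pochhammer_rec)
  also have "pochhammer r (Suc n) = (r + real n) * pochhammer r n" by (rule pochhammer_rec')
  finally have e: "pochhammer (r+1) n = (r + real n) * pochhammer r n / r" using r by (simp add: field_simps)
  have "r + 1 > 0" using r by simp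
  then show ?thesis using r p0
    by (simp only: nb_pos_form[OF \<open>r+1>0\<close>] nb_pos_form[OF r] e powr_add) (simp add: field_simps)
qed

lemma E_cmp_step:
  assumes r: "r > 0" and h: "antimono h" and hb: "\<And>n. \<bar>h n\<bar> \<le> M"
  shows "nb_expect (r+1) p h \<le> nb_expect r p h"
proof -
  define n0 where "n0 = nat \<lceil>r * (1-p) / p\<rceil>"
  define c where "c = h n0"
  have lh: "lin_bd h" by (rule lin_bdI[of _ M 0]) (simp add: hb)
  have lhc: "lin_bd (\<lambda>n. h n - c)" using lh by (intro lin_bd_diff) auto
  have r1: "r + 1 \<ge> 0" "r \<ge> 0" using r by auto
  have "nb_expect (r+1) p h - nb_expect r p h =
        nb_expect (r+1) p (\<lambda>n. h n - c) - nb_expect r p (\<lambda>n. h n - c)"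
    using r1 lh by (simp add: E_diff E_const)
  also have "\<dots> = (\<Sum>n. nb_pmf (r+1) p n * (h n - c) - nb_pmf r p n * (h n - c))"
    unfolding nb_expect_def
    using summable_lin[OF r1(1) lhc] summable_lin[OF r1(2) lhc] by (rule suminf_diff)
  also have "\<dots> \<le> 0"
  proof -
    have sm: "summable (\<lambda>n. nb_pmf (r+1) p n * (h n - c) - nb_pmf r p n * (h n - c))"
      by (intro summable_diff summable_lin[OF _ lhc]) (use r1 in simp_all)
    have tw: "nb_pmf (r+1) p n * (h n - c) - nb_pmf r p n * (h n - c) \<le> 0" for n
    proof -
    have eq: "nb_pmf (r+1) p n * (h n - c) - nb_pmf r p n * (h n - c)
        = nb_pmf r p n * ((p * (r + real n) - r) / r * (h n - c))"
      using r by (simp only: nb_succ[OF r]) (simp add: field_simps)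
    have "(p * (r + real n) - r) / r * (h n - c) \<le> 0"
    proof (cases "n < n0")
      case True
      hence "real n < r * (1-p) / p" unfolding n0_def by linarith
      hence "p * real n < r * (1 - p)" using p0 by (simp add: field_simps)
      hence "p * (r + real n) - r < 0" by (simp add: algebra_simps)
      moreover have "h n - c \<ge> 0" using h True unfolding c_def antimono_def by simp
      ultimately have "(p * (r + real n) - r) * (h n - c) \<le> 0" by (simp add: mult_nonpos_nonneg)
      then show ?thesis using r by (simp add: divide_nonpos_pos)
    next
      case False
      hence "real n \<ge> r * (1-p) / p" unfolding n0_def by linarith
      hence "p * real n \<ge> r * (1 - p)" using p0 by (simp add: field_simps)
      hence "p * (r + real n) - r \<ge> 0" by (simp add: algebra_simps)
      moreover have "h n - c \<le> 0" using h False unfolding c_def antimono_def by simp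
      ultimately have "(p * (r + real n) - r) * (h n - c) \<le> 0" by (simp add: mult_nonneg_nonpos)
      then show ?thesis using r by (simp add: divide_nonpos_pos)
    qed
    then show "nb_pmf (r+1) p n * (h n - c) - nb_pmf r p n * (h n - c) \<le> 0"
      unfolding eq using nb_nonneg[OF r1(2) p0 p1, of n] by (metis mult_nonneg_nonpos)
    qed
    show ?thesis using suminf_le[OF tw sm summable_zero] by simp
  qed
  finally show ?thesis by simp
qed

lemma E_cmp_iter:
  assumes "s > 0 \<or> j = 0" "antimono h" "\<And>n. \<bar>h n\<bar> \<le> M"
  shows "nb_expect (s + real j) p h \<le> nb_expect s p h"
  using assms(1)
proof (induction j)
  case 0 then show ?case by simp
next
  case (Suc j)
  hence s: "s > 0" by simp
  have "nb_expect (s + real (Suc j)) p h = nb_expect ((s + real j) + 1) p h" by (simp add: add_ac)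
  also have "\<dots> \<le> nb_expect (s + real j) p h"
    by (rule E_cmp_step[OF _ assms(2,3)]) (use s in simp)
  also have "\<dots> \<le> nb_expect s p h" using Suc s by simp
  finally show ?case .
qed

end



definition Sx :: "(int \<Rightarrow> real) \<Rightarrow> int \<Rightarrow> int" where
  "Sx g x = x + int (LEAST j. g (x + int j + 1) - g (x + int j) \<ge> 0)"

lemma dmono_int:
  fixes d :: "int \<Rightarrow> real"
  assumes "\<And>a. d a \<le> d (a+1)" "a \<le> b"
  shows "d a \<le> d b"
proof -
  have "d a \<le> d (a + int j)" for j
  proof (induction j)
    case 0 then show ?case by simp
  next
    case (Suc j) then show ?case using assms(1)[of "a + int j"] by (simp add: add_ac)
  qed
  from this[of "nat (b - a)"] assms(2) show ?thesis by simp
qed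

lemma min_lemma:
  fixes g :: "int \<Rightarrow> real"
  assumes mono: "\<And>a. g (a+1) - g a \<le> g (a+1+1) - g (a+1)"
      and ev: "\<And>x. \<exists>a\<ge>x. g (a+1) - g a \<ge> 0"
  shows "x \<le> Sx g x" "\<And>a. x \<le> a \<Longrightarrow> g (Sx g x) \<le> g a"
        "Inf {g a - c | a. x \<le> a} = g (Sx g x) - c"
        "g (Sx g (x+1)) - g (Sx g x) = max (g (x+1) - g x) 0"
proof -
  define d where "d a = g (a+1) - g a" for a
  have dm: "d a \<le> d b" if "a \<le> b" for a b
    using dmono_int[of d a b] mono that unfolding d_def by (simp add: add.assoc)
  define P where "P y j \<longleftrightarrow> g (y + int j + 1) - g (y + int j) \<ge> 0" for y j
  have Sx_eq: "Sx g y = y + int (LEAST j. P y j)" for y unfolding Sx_def P_def by simp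
  have exP: "\<exists>j. P y j" for y
  proof -
    obtain a where "a \<ge> y" "g (a+1) - g a \<ge> 0" using ev by blast
    then show ?thesis unfolding P_def by (intro exI[of _ "nat (a - y)"]) simp
  qed
  show "x \<le> Sx g x" unfolding Sx_eq by simp
  define L where "L = (LEAST j. P x j)"
  have PL: "P x L" unfolding L_def by (rule LeastI_ex[OF exP])
  have nPL: "\<not> P x i" if "i < L" for i using not_less_Least[of i "P x"] that unfolding L_def by simp
  have up: "g (x + int L) \<le> g (x + int (L + i))" for i
  proof (induction i)
    case 0 then show ?case by simp
  next
    case (Suc i)
    have "d (x + int L) \<le> d (x + int (L + i))" by (rule dm) simp
    moreover have "d (x + int L) \<ge> 0" using PL unfolding P_def d_def .
    ultimately have "g (x + int (L+i)) \<le> g (x + int (L + i) + 1)" unfolding d_def by simp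
    then show ?case using Suc by (simp add: add_ac)
  qed
  have down: "g (x + int L) \<le> g (x + int i)" if "i \<le> L" for i
    using that
  proof (induction i rule: inc_induct)
    case base then show ?case by simp
  next
    case (step n)
    have "\<not> P x n" using nPL step by simp
    hence lt: "g (x + int n + 1) < g (x + int n)" unfolding P_def by simp
    have e: "x + int (Suc n) = x + int n + 1" by simp
    have "g (x + int (Suc n)) < g (x + int n)" unfolding e by (rule lt)
    with step.IH show ?case by (rule order_trans[OF _ less_imp_le])
  qed
  show allle: "g (Sx g x) \<le> g a" if "x \<le> a" for a
  proof -
    define i where "i = nat (a - x)"
    have i: "a = x + int i" using that unfolding i_def by simp
    show ?thesis
    proof (cases "i \<le> L")
      case True then show ?thesis using down i unfolding Sx_eq L_def[symmetric] by simp
    next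
      case False
      then obtain k where "i = L + k" using le_Suc_ex[of L i] by auto
      then show ?thesis using up i unfolding Sx_eq L_def[symmetric] by simp
    qed
  qed
  show "Inf {g a - c | a. x \<le> a} = g (Sx g x) - c"
  proof (rule cInf_eq_minimum)
    show "g (Sx g x) - c \<in> {g a - c | a. x \<le> a}" unfolding Sx_eq by force
  next
    fix y assume "y \<in> {g a - c | a. x \<le> a}"
    then obtain a where "x \<le> a" "y = g a - c" by blast
    then show "g (Sx g x) - c \<le> y" using allle by simp
  qed
  show "g (Sx g (x+1)) - g (Sx g x) = max (g (x+1) - g x) 0"
  proof (cases "P x 0")
    case True
    hence d0: "d x \<ge> 0" unfolding P_def d_def by simp
    have "d (x+1) \<ge> 0" using dm[of x "x+1"] d0 by simp
    hence "P (x+1) 0" unfolding P_def d_def by simp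
    hence "(LEAST j. P (x+1) j) = 0" "(LEAST j. P x j) = 0" using True by (simp_all add: Least_eq_0)
    then show ?thesis unfolding Sx_eq using d0 unfolding d_def by simp
  next
    case False
    hence "(LEAST j. P x j) = Suc (LEAST m. P x (Suc m))" using Least_Suc exP by (metis LeastI_ex)
    moreover have "P x (Suc m) = P (x+1) m" for m unfolding P_def by (simp add: add_ac)
    ultimately have "Sx g x = Sx g (x+1)" unfolding Sx_eq by simp
    moreover have "g (x+1) - g x < 0" using False unfolding P_def by simp
    ultimately show ?thesis by simp
  qed
qed



lemma maxdiff1: "max (real_of_int (a+1) - real z) 0 - max (real_of_int a - real z) 0 = (if int z \<le> a then 1 else 0)"
proof (cases "int z \<le> a")
  case True
  hence "real z \<le> real_of_int a" by (metis of_int_le_iff of_int_of_nat_eq)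
  then show ?thesis using True by simp
next
  case False
  hence "real_of_int a + 1 \<le> real z" by (metis of_int_le_iff of_int_of_nat_eq of_int_add of_int_1 not_le zless_imp_add1_zle)
  then show ?thesis using False by simp
qed

lemma maxdiff2: "max (real z - real_of_int (a+1)) 0 - max (real z - real_of_int a) 0 = (if a < int z then -1 else 0)"
proof (cases "a < int z")
  case True
  hence "real_of_int a + 1 \<le> real z" by (metis of_int_le_iff of_int_of_nat_eq of_int_add of_int_1 zless_imp_add1_zle)
  then show ?thesis using True by simp
next
  case False
  hence "real z \<le> real_of_int a" by (metis of_int_le_iff of_int_of_nat_eq not_less)
  then show ?thesis using False by simp
qed

locale stage = nbp p for p +
  fixes N :: nat and alpha cv ch cb A0 B0 C0 Dw :: real and W :: "int \<Rightarrow> nat \<Rightarrow> real"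
  assumes N1: "N \<ge> 1" and a0: "alpha > 0" and cvp: "cv > 0" and chp: "ch > 0" and cbp: "cb > 0"
  and ABC: "A0 \<ge> 0" "B0 \<ge> 0" "C0 \<ge> 0" "Dw \<ge> 0"
  and W0: "\<And>x k. 0 \<le> W x k"
  and Wb: "\<And>x k. W x k \<le> A0 + B0 * \<bar>real_of_int x\<bar> + C0 * real k"
  and dWlo: "\<And>x k. -cv \<le> W (x+1) k - W x k"
  and dWhi: "\<And>x k. W (x+1) k - W x k \<le> Dw"
  and conv: "\<And>x k. W (x+1) k - W x k \<le> W (x+1+1) k - W (x+1) k"
  and anti: "\<And>x k. W (x+1) (Suc k) - W x (Suc k) \<le> W (x+1) k - W x k"
begin

definition "rr k = alpha + real k"
definition "ss k = (real N - 1) * rr k"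
definition "Q = (1 - p) / p"
definition "Inn a k z = nb_expect (ss k) p (\<lambda>kk. W (a - int z) (k + z + kk))"
definition "dW x k = W (x+1) k - W x k"
definition "Hh a k z = nb_expect (ss k) p (\<lambda>kk. dW (a - int z) (k + z + kk))"
definition "Gs a k = cv * real_of_int a
      + ch * nb_expect (rr k) p (\<lambda>z. max (real_of_int a - real z) 0)
      + cb * nb_expect (rr k) p (\<lambda>z. max (real z - real_of_int a) 0)
      + nb_expect (rr k) p (\<lambda>z. Inn a k z)"
definition "DG a k = cv + ch * nb_expect (rr k) p (\<lambda>z. if int z \<le> a then 1 else 0)
      + cb * nb_expect (rr k) p (\<lambda>z. if a < int z then -1 else 0)
      + nb_expect (rr k) p (\<lambda>z. Hh a k z)"

lemma rr_pos: "rr k > 0" using a0 unfolding rr_def by simp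
lemma rr_nn: "rr k \<ge> 0" using rr_pos less_imp_le by blast
lemma rr_Suc: "rr (Suc k) = rr k + 1" unfolding rr_def by simp
lemma ss_nn: "ss k \<ge> 0" using N1 rr_nn unfolding ss_def by simp
lemma ss_Suc: "ss (Suc k) = ss k + real (N - 1)" using N1 unfolding ss_def rr_def by (simp add: of_nat_diff algebra_simps)
lemma ss_pos_or: "ss k > 0 \<or> N - 1 = 0"
  using N1 rr_pos[of k] unfolding ss_def by (cases "N = 1") auto
lemma Q_nn: "Q \<ge> 0" using p0 p1 unfolding Q_def by simp
lemma M1_eq: "r * (1 - p) / p = r * Q" unfolding Q_def by simp

lemma absint: "\<bar>real_of_int (a - int z)\<bar> \<le> \<bar>real_of_int a\<bar> + real z" by simp

lemma W_le: "W (a - int z) (k + z + kk) \<le> (A0 + B0 * \<bar>real_of_int a\<bar> + (B0 + C0) * real z + C0 * real k) + C0 * real kk"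
proof -
  have "W (a - int z) (k + z + kk) \<le> A0 + B0 * \<bar>real_of_int (a - int z)\<bar> + C0 * real (k + z + kk)" by (rule Wb)
  also have "\<dots> \<le> A0 + B0 * (\<bar>real_of_int a\<bar> + real z) + C0 * real (k + z + kk)"
    using mult_left_mono[OF absint ABC(2)] by simp
  finally show ?thesis by (simp add: algebra_simps)
qed

lemma W_lin: "lin_bd (\<lambda>kk. W (a - int z) (k + z + kk))"
  by (rule lin_bdI[of _ "A0 + B0 * \<bar>real_of_int a\<bar> + (B0 + C0) * real z + C0 * real k" C0]) (use W_le W0 in simp)

lemma Inn_nn: "0 \<le> Inn a k z"
  unfolding Inn_def by (rule E_nonneg[OF ss_nn W_lin W0])

lemma Inn_le: "Inn a k z \<le> (A0 + B0 * \<bar>real_of_int a\<bar> + C0 * real k + C0 * (ss k * Q)) + (B0 + C0) * real z"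
proof -
  have "Inn a k z \<le> (A0 + B0 * \<bar>real_of_int a\<bar> + (B0 + C0) * real z + C0 * real k) + C0 * (ss k * (1-p) / p)"
    unfolding Inn_def by (rule E_le_lin[OF ss_nn W_lin W_le])
  then show ?thesis unfolding M1_eq by (simp add: algebra_simps)
qed

lemma Inn_lin: "lin_bd (Inn a k)"
  by (rule lin_bdI[of _ "A0 + B0 * \<bar>real_of_int a\<bar> + C0 * real k + C0 * (ss k * Q)" "B0 + C0"])
     (use Inn_le Inn_nn in simp)

lemma dW_bd: "\<bar>dW x k\<bar> \<le> cv + Dw"
  using dWlo[of x k] dWhi[of x k] cvp ABC unfolding dW_def by simp

lemma dW_lin: "lin_bd (\<lambda>kk. dW (a - int z) (k + z + kk))"
  by (rule lin_bdI[of _ "cv + Dw" 0]) (simp add: dW_bd)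

lemma Hh_lo: "-cv \<le> Hh a k z"
  unfolding Hh_def by (rule E_ge_const[OF ss_nn dW_lin]) (simp add: dW_def dWlo)
lemma Hh_hi: "Hh a k z \<le> Dw"
  unfolding Hh_def by (rule E_le_const[OF ss_nn dW_lin]) (simp add: dW_def dWhi)
lemma Hh_bd: "\<bar>Hh a k z\<bar> \<le> cv + Dw" using Hh_lo[of a k z] Hh_hi[of a k z] cvp ABC by simp
lemma Hh_lin: "lin_bd (Hh a k)" by (rule lin_bdI[of _ "cv + Dw" 0]) (simp add: Hh_bd)

lemma Inn_diff: "Inn (a+1) k z - Inn a k z = Hh a k z"
proof -
  have e: "a + 1 - int z = (a - int z) + 1" by simp
  show ?thesis unfolding Inn_def Hh_def dW_def
    using E_diff[OF ss_nn W_lin[of "a+1" z k] W_lin[of a z k]] by (simp add: e)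
qed

lemma lin_max1: "lin_bd (\<lambda>z. max (real_of_int a - real z) 0)"
  by (rule lin_bdI[of _ "\<bar>real_of_int a\<bar>" 1]) simp
lemma lin_max2: "lin_bd (\<lambda>z. max (real z - real_of_int a) 0)"
  by (rule lin_bdI[of _ "\<bar>real_of_int a\<bar>" 1]) simp
lemma lin_ind1: "lin_bd (\<lambda>z. if int z \<le> a then 1 else 0 :: real)"
  by (rule lin_bdI[of _ 1 0]) simp
lemma lin_ind2: "lin_bd (\<lambda>z. if a < int z then -1 else 0 :: real)"
  by (rule lin_bdI[of _ 1 0]) simp

lemma DG_eq: "Gs (a+1) k - Gs a k = DG a k"
proof -
  have r: "rr k \<ge> 0" by (rule rr_nn)
  have e1: "nb_expect (rr k) p (\<lambda>z. max (real_of_int (a+1) - real z) 0) - nb_expect (rr k) p (\<lambda>z. max (real_of_int a - real z) 0)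
      = nb_expect (rr k) p (\<lambda>z. if int z \<le> a then 1 else 0)"
    using E_diff[OF r lin_max1 lin_max1, of "a+1" a] by (simp only: maxdiff1)
  have e2: "nb_expect (rr k) p (\<lambda>z. max (real z - real_of_int (a+1)) 0) - nb_expect (rr k) p (\<lambda>z. max (real z - real_of_int a) 0)
      = nb_expect (rr k) p (\<lambda>z. if a < int z then -1 else 0)"
    using E_diff[OF r lin_max2 lin_max2, of "a+1" a] by (simp only: maxdiff2)
  have e3: "nb_expect (rr k) p (Inn (a+1) k) - nb_expect (rr k) p (Inn a k) = nb_expect (rr k) p (Hh a k)"
    using E_diff[OF r Inn_lin Inn_lin, of "a+1" k a k] by (simp only: Inn_diff)
  have "Gs (a+1) k - Gs a k = cv * (real_of_int (a+1) - real_of_int a)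
     + ch * (nb_expect (rr k) p (\<lambda>z. max (real_of_int (a+1) - real z) 0) - nb_expect (rr k) p (\<lambda>z. max (real_of_int a - real z) 0))
     + cb * (nb_expect (rr k) p (\<lambda>z. max (real z - real_of_int (a+1)) 0) - nb_expect (rr k) p (\<lambda>z. max (real z - real_of_int a) 0))
     + (nb_expect (rr k) p (Inn (a+1) k) - nb_expect (rr k) p (Inn a k))"
    unfolding Gs_def by (simp add: algebra_simps)
  also have "\<dots> = DG a k" unfolding e1 e2 e3 DG_def by simp
  finally show ?thesis .
qed

lemma dW_conv: "dW x k \<le> dW (x+1) k" unfolding dW_def by (rule conv)
lemma dW_anti: "dW x (Suc k) \<le> dW x k" unfolding dW_def by (rule anti)
lemma dW_mono_x: "x \<le> y \<Longrightarrow> dW x k \<le> dW y k"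
  using dmono_int[of "\<lambda>x. dW x k" x y] dW_conv by simp
lemma dW_anti_k: "j \<le> l \<Longrightarrow> dW x l \<le> dW x j"
  using decseq_SucI[of "\<lambda>k. dW x k"] dW_anti unfolding antimono_def by blast

lemma DG_mono: "DG a k \<le> DG (a+1) k"
proof -
  have r: "rr k \<ge> 0" by (rule rr_nn)
  have 1: "nb_expect (rr k) p (\<lambda>z. if int z \<le> a then 1 else 0) \<le> nb_expect (rr k) p (\<lambda>z. if int z \<le> a + 1 then 1 else 0)"
    by (rule E_mono[OF r lin_ind1 lin_ind1]) simp
  have 2: "nb_expect (rr k) p (\<lambda>z. if a < int z then -1 else 0) \<le> nb_expect (rr k) p (\<lambda>z. if a + 1 < int z then -1 else 0)"
    by (rule E_mono[OF r lin_ind2 lin_ind2]) simp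
  have 3: "nb_expect (rr k) p (Hh a k) \<le> nb_expect (rr k) p (Hh (a+1) k)"
  proof (rule E_mono[OF r Hh_lin Hh_lin])
    fix z
    show "Hh a k z \<le> Hh (a+1) k z" unfolding Hh_def
      by (rule E_mono[OF ss_nn dW_lin dW_lin]) (rule dW_mono_x, simp)
  qed
  show ?thesis unfolding DG_def
    using mult_left_mono[OF 1 less_imp_le[OF chp]] mult_left_mono[OF 2 less_imp_le[OF cbp]] 3 by linarith
qed

lemma Hh_Suc_k: "Hh a (Suc k) z \<le> Hh a k z"
proof -
  have "Hh a (Suc k) z = nb_expect (ss k + real (N-1)) p (\<lambda>kk. dW (a - int z) (Suc k + z + kk))"
    unfolding Hh_def ss_Suc ..
  also have "\<dots> \<le> nb_expect (ss k + real (N-1)) p (\<lambda>kk. dW (a - int z) (k + z + kk))"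
    by (rule E_mono) (use ss_nn[of k] dW_lin[of a z "Suc k"] dW_lin[of a z k] dW_anti in auto)
  also have "\<dots> \<le> nb_expect (ss k) p (\<lambda>kk. dW (a - int z) (k + z + kk))"
  proof (rule E_cmp_iter[OF ss_pos_or])
    show "antimono (\<lambda>kk. dW (a - int z) (k + z + kk))"
      unfolding antimono_def by (auto intro: dW_anti_k)
    show "\<bar>dW (a - int z) (k + z + kk)\<bar> \<le> cv + Dw" for kk by (rule dW_bd)
  qed
  finally show ?thesis unfolding Hh_def .
qed

lemma Hh_anti_z: "antimono (Hh a k)"
proof (rule decseq_SucI)
  fix z
  show "Hh a k (Suc z) \<le> Hh a k z" unfolding Hh_def
  proof (rule E_mono[OF ss_nn dW_lin dW_lin])
    fix kk
    have "dW (a - int (Suc z)) (k + Suc z + kk) \<le> dW (a - int (Suc z)) (k + z + kk)"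
      by (rule dW_anti_k) simp
    also have "\<dots> \<le> dW (a - int z) (k + z + kk)" by (rule dW_mono_x) simp
    finally show "dW (a - int (Suc z)) (k + Suc z + kk) \<le> dW (a - int z) (k + z + kk)" .
  qed
qed

lemma DG_anti: "DG a (Suc k) \<le> DG a k"
proof -
  have r: "rr k \<ge> 0" "rr (Suc k) \<ge> 0" by (rule rr_nn)+
  have 1: "nb_expect (rr (Suc k)) p (\<lambda>z. if int z \<le> a then 1 else 0) \<le> nb_expect (rr k) p (\<lambda>z. if int z \<le> a then 1 else 0)"
    unfolding rr_Suc by (rule E_cmp_step[OF rr_pos, of _ 1]) (auto simp: antimono_def)
  have 2: "nb_expect (rr (Suc k)) p (\<lambda>z. if a < int z then -1 else 0) \<le> nb_expect (rr k) p (\<lambda>z. if a < int z then -1 else 0)"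
    unfolding rr_Suc by (rule E_cmp_step[OF rr_pos, of _ 1]) (auto simp: antimono_def)
  have "nb_expect (rr (Suc k)) p (Hh a (Suc k)) \<le> nb_expect (rr (Suc k)) p (Hh a k)"
    by (rule E_mono[OF r(2) Hh_lin Hh_lin Hh_Suc_k])
  also have "\<dots> \<le> nb_expect (rr k) p (Hh a k)"
    unfolding rr_Suc by (rule E_cmp_step[OF rr_pos Hh_anti_z Hh_bd])
  finally have 3: "nb_expect (rr (Suc k)) p (Hh a (Suc k)) \<le> nb_expect (rr k) p (Hh a k)" .
  show ?thesis unfolding DG_def
    using mult_left_mono[OF 1 less_imp_le[OF chp]] mult_left_mono[OF 2 less_imp_le[OF cbp]] 3 by linarith
qed

lemma DG_hi: "DG a k \<le> cv + ch + Dw"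
proof -
  have r: "rr k \<ge> 0" by (rule rr_nn)
  have 1: "nb_expect (rr k) p (\<lambda>z. if int z \<le> a then 1 else 0) \<le> 1"
    by (rule E_le_const[OF r lin_ind1]) simp
  have 2: "nb_expect (rr k) p (\<lambda>z. if a < int z then -1 else 0) \<le> 0"
    by (rule E_le_const[OF r lin_ind2]) simp
  have 3: "nb_expect (rr k) p (Hh a k) \<le> Dw"
    by (rule E_le_const[OF r Hh_lin Hh_hi])
  show ?thesis unfolding DG_def
    using mult_left_mono[OF 1 less_imp_le[OF chp]] mult_left_mono[OF 2 less_imp_le[OF cbp]] 3 by linarith
qed

lemma DG_ev: "\<exists>a\<ge>x. DG a k \<ge> 0"
proof -
  have r: "rr k \<ge> 0" by (rule rr_nn)
  define M where "M = rr k * Q"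
  have M0: "M \<ge> 0" unfolding M_def using r Q_nn by simp
  define a where "a = max x (int (nat \<lceil>(ch+cb) * M / ch\<rceil>))"
  have ax: "a \<ge> x" unfolding a_def by simp
  have a0': "a \<ge> 0" unfolding a_def by (rule order_trans[OF _ max.cobounded2]) simp
  have aM: "real_of_int a \<ge> (ch+cb) * M / ch" unfolding a_def by linarith
  have pos: "real_of_int a + 1 > 0" using a0' by simp
  have 1: "nb_expect (rr k) p (\<lambda>z. if int z \<le> a then 1 else 0) = 1 + nb_expect (rr k) p (\<lambda>z. if a < int z then -1 else 0)"
  proof -
    have "(\<lambda>z. if int z \<le> a then 1 else 0 :: real) = (\<lambda>z. 1 + (if a < int z then -1 else 0))" by auto
    then show ?thesis using E_add[OF r lin_bd_const lin_ind2, of 1 a] E_const[OF r, of 1] by simp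
  qed
  have lz: "lin_bd (\<lambda>z. (- 1 / (real_of_int a + 1)) * real z)" by (intro lin_bd_cmult lin_bd_id)
  have 2: "nb_expect (rr k) p (\<lambda>z. if a < int z then -1 else 0) \<ge> - M / (real_of_int a + 1)"
  proof -
    have "nb_expect (rr k) p (\<lambda>z. (- 1 / (real_of_int a + 1)) * real z) \<le> nb_expect (rr k) p (\<lambda>z. if a < int z then -1 else 0)"
    proof (rule E_mono[OF r lz lin_ind2])
      fix z
      show "(- 1 / (real_of_int a + 1)) * real z \<le> (if a < int z then -1 else 0)"
      proof (cases "a < int z")
        case True
        hence "real_of_int a + 1 \<le> real z" by (metis of_int_le_iff of_int_of_nat_eq of_int_add of_int_1 zless_imp_add1_zle)
        then show ?thesis using True pos by (simp add: field_simps)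
      next
        case False then show ?thesis using pos by (simp add: field_simps)
      qed
    qed
    moreover have "nb_expect (rr k) p (\<lambda>z. (- 1 / (real_of_int a + 1)) * real z) = - M / (real_of_int a + 1)"
      using E_cmult[OF r lin_bd_id, of "- 1 / (real_of_int a + 1)"] E_id[OF r] unfolding M_def M1_eq by simp
    ultimately show ?thesis by simp
  qed
  have 3: "nb_expect (rr k) p (Hh a k) \<ge> -cv"
    by (rule E_ge_const[OF r Hh_lin Hh_lo])
  have "(ch + cb) * M \<le> ch * (real_of_int a + 1)"
    using aM chp cbp M0 by (simp add: field_simps)
  hence 4: "(ch + cb) * (M / (real_of_int a + 1)) \<le> ch" using pos by (simp add: field_simps)
  have "DG a k = cv + ch + (ch + cb) * nb_expect (rr k) p (\<lambda>z. if a < int z then -1 else 0) + nb_expect (rr k) p (Hh a k)"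
    unfolding DG_def 1 by (simp add: algebra_simps)
  also have "\<dots> \<ge> cv + ch + (ch + cb) * (- M / (real_of_int a + 1)) - cv"
    using mult_left_mono[OF 2 less_imp_le[OF add_pos_pos[OF chp cbp]]] 3 chp cbp by simp
  finally have "DG a k \<ge> ch - (ch + cb) * (M / (real_of_int a + 1))" by simp
  then show ?thesis using 4 ax by (intro exI[of _ a]) simp
qed

lemma Gs_nn: "x \<le> a \<Longrightarrow> 0 \<le> Gs a k - cv * real_of_int x"
proof -
  assume xa: "x \<le> a"
  have r: "rr k \<ge> 0" by (rule rr_nn)
  have e1: "0 \<le> nb_expect (rr k) p (\<lambda>z. max (real_of_int a - real z) 0)" by (rule E_nonneg[OF r lin_max1]) simp
  have e2: "0 \<le> nb_expect (rr k) p (\<lambda>z. max (real z - real_of_int a) 0)" by (rule E_nonneg[OF r lin_max2]) simp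
  have e3: "0 \<le> nb_expect (rr k) p (Inn a k)" by (rule E_nonneg[OF r Inn_lin Inn_nn])
  have e4: "cv * real_of_int x \<le> cv * real_of_int a" using xa cvp by simp
  show ?thesis unfolding Gs_def using e3 e4 mult_nonneg_nonneg[OF less_imp_le[OF chp] e1] mult_nonneg_nonneg[OF less_imp_le[OF cbp] e2] by linarith
qed

lemma Gs_le: "Gs x k - cv * real_of_int x \<le>
   (A0 + (ch + cb + (real N - 1) * C0 + B0 + C0) * Q * alpha) + (ch + cb + B0) * \<bar>real_of_int x\<bar>
     + (C0 + (ch + cb + (real N - 1) * C0 + B0 + C0) * Q) * real k"
proof -
  have r: "rr k \<ge> 0" by (rule rr_nn)
  have 1: "nb_expect (rr k) p (\<lambda>z. max (real_of_int x - real z) 0) \<le> \<bar>real_of_int x\<bar> + 1 * (rr k * (1-p)/p)"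
    by (rule E_le_lin[OF r lin_max1]) simp
  have 2: "nb_expect (rr k) p (\<lambda>z. max (real z - real_of_int x) 0) \<le> \<bar>real_of_int x\<bar> + 1 * (rr k * (1-p)/p)"
    by (rule E_le_lin[OF r lin_max2]) simp
  have 3: "nb_expect (rr k) p (Inn x k) \<le> (A0 + B0 * \<bar>real_of_int x\<bar> + C0 * real k + C0 * (ss k * Q)) + (B0 + C0) * (rr k * (1-p)/p)"
    by (rule E_le_lin[OF r Inn_lin Inn_le])
  have "Gs x k - cv * real_of_int x \<le> ch * (\<bar>real_of_int x\<bar> + rr k * Q) + cb * (\<bar>real_of_int x\<bar> + rr k * Q)
      + ((A0 + B0 * \<bar>real_of_int x\<bar> + C0 * real k + C0 * (ss k * Q)) + (B0 + C0) * (rr k * Q))"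
    using mult_left_mono[OF 1 less_imp_le[OF chp]] mult_left_mono[OF 2 less_imp_le[OF cbp]] 3 unfolding Gs_def M1_eq mult.left_neutral by linarith
  also have "\<dots> = (A0 + (ch + cb + (real N - 1) * C0 + B0 + C0) * Q * alpha) + (ch + cb + B0) * \<bar>real_of_int x\<bar>
     + (C0 + (ch + cb + (real N - 1) * C0 + B0 + C0) * Q) * real k"
    unfolding ss_def rr_def by (simp add: algebra_simps)
  finally show ?thesis .
qed

definition "Vn x k = Inf {Gs a k - cv * real_of_int x | a. x \<le> a}"

lemma ml_mono: "(\<lambda>a. Gs a k) (a+1) - (\<lambda>a. Gs a k) a \<le> (\<lambda>a. Gs a k) (a+1+1) - (\<lambda>a. Gs a k) (a+1)"
  using DG_eq[of a k] DG_eq[of "a+1" k] DG_mono[of a k] by simp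
lemma ml_ev: "\<exists>a\<ge>x. (\<lambda>a. Gs a k) (a+1) - (\<lambda>a. Gs a k) a \<ge> 0"
  using DG_ev[of x k] DG_eq by simp

lemma MinL: "x \<le> Sx (\<lambda>a. Gs a k) x" "\<And>a. x \<le> a \<Longrightarrow> Gs (Sx (\<lambda>a. Gs a k) x) k \<le> Gs a k"
   "Inf {Gs a k - c | a. x \<le> a} = Gs (Sx (\<lambda>a. Gs a k) x) k - c"
   "Gs (Sx (\<lambda>a. Gs a k) (x+1)) k - Gs (Sx (\<lambda>a. Gs a k) x) k = max (Gs (x+1) k - Gs x k) 0"
  using min_lemma[where g="\<lambda>a. Gs a k" and x=x, OF ml_mono ml_ev] by simp_all

lemma Vn_eq: "Vn x k = Gs (Sx (\<lambda>a. Gs a k) x) k - cv * real_of_int x"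
  unfolding Vn_def by (rule MinL(3))

lemma Vn_nn: "0 \<le> Vn x k"
  unfolding Vn_eq by (rule Gs_nn) (rule MinL(1))

lemma Vn_le: "Vn x k \<le> Gs x k - cv * real_of_int x"
  unfolding Vn_eq using MinL(2)[where x=x and a=x and k=k] by simp

lemma Vn_diff: "Vn (x+1) k - Vn x k = max (DG x k) 0 - cv"
proof -
  have "Vn (x+1) k - Vn x k = (Gs (Sx (\<lambda>a. Gs a k) (x+1)) k - Gs (Sx (\<lambda>a. Gs a k) x) k) - cv"
    unfolding Vn_eq by (simp add: algebra_simps)
  also have "\<dots> = max (DG x k) 0 - cv" using MinL(4)[where x=x and k=k] DG_eq[of x k] by simp
  finally show ?thesis .
qed

end

definition goodV :: "real \<Rightarrow> (int \<Rightarrow> nat \<Rightarrow> real) \<Rightarrow> bool" where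
 "goodV cv W \<longleftrightarrow> (\<forall>x k. 0 \<le> W x k)
    \<and> (\<exists>A B C. A \<ge> 0 \<and> B \<ge> 0 \<and> C \<ge> 0 \<and> (\<forall>x k. W x k \<le> A + B * \<bar>real_of_int x\<bar> + C * real k))
    \<and> (\<exists>D \<ge> 0. \<forall>x k. -cv \<le> W (x+1) k - W x k \<and> W (x+1) k - W x k \<le> D)
    \<and> (\<forall>x k. W (x+1) k - W x k \<le> W (x+1+1) k - W (x+1) k)
    \<and> (\<forall>x k. W (x+1) (Suc k) - W x (Suc k) \<le> W (x+1) k - W x k)"

lemma goodV_zero: "cv > 0 \<Longrightarrow> goodV cv (\<lambda>x k. 0)"
  unfolding goodV_def by (auto intro!: exI[of _ 0])

lemma pt_bounds: "beta0 > 0 \<Longrightarrow> 0 < p_t N beta0 t \<and> p_t N beta0 t < 1"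
proof -
  assume b: "beta0 > 0"
  have "0 < beta0 + real N * real t" using b by (simp add: add_pos_nonneg)
  then show ?thesis unfolding p_t_def by (simp add: divide_simps)
qed

lemma step_lemma:
  assumes N1: "N \<ge> 1" and a0: "alpha > 0" and b0: "beta0 > 0" and pos: "cv > 0" "ch > 0" "cb > 0"
    and gW: "goodV cv W"
  shows "\<forall>a. antimono (\<lambda>k. G_stage N alpha beta0 cv ch cb t W (a+1) k - G_stage N alpha beta0 cv ch cb t W a k)"
    and "goodV cv (\<lambda>x k. Inf {G_stage N alpha beta0 cv ch cb t W a k - cv * real_of_int x | a. x \<le> a})"
proof -
  from gW obtain A B C D where W0: "\<And>x k. 0 \<le> W x k" and ABC: "A \<ge> 0" "B \<ge> 0" "C \<ge> 0"
    and Wb: "\<And>x k. W x k \<le> A + B * \<bar>real_of_int x\<bar> + C * real k"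
    and D: "D \<ge> 0" "\<And>x k. -cv \<le> W (x+1) k - W x k" "\<And>x k. W (x+1) k - W x k \<le> D"
    and cv: "\<And>x k. W (x+1) k - W x k \<le> W (x+1+1) k - W (x+1) k"
    and an: "\<And>x k. W (x+1) (Suc k) - W x (Suc k) \<le> W (x+1) k - W x k"
    unfolding goodV_def by metis
  interpret S: stage "p_t N beta0 t" N alpha cv ch cb A B C D W
    by unfold_locales (use pt_bounds[OF b0] N1 a0 pos ABC W0 Wb D cv an in auto)
  have Geq: "G_stage N alpha beta0 cv ch cb t W a k = S.Gs a k" for a k
    unfolding G_stage_def Let_def S.Gs_def S.Inn_def S.rr_def S.ss_def ..
  show "\<forall>a. antimono (\<lambda>k. G_stage N alpha beta0 cv ch cb t W (a+1) k - G_stage N alpha beta0 cv ch cb t W a k)"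
    unfolding Geq S.DG_eq by (auto intro!: decseq_SucI S.DG_anti)
  have Veq: "(\<lambda>x k. Inf {G_stage N alpha beta0 cv ch cb t W a k - cv * real_of_int x | a. x \<le> a}) = S.Vn"
    unfolding Geq S.Vn_def by (intro ext) simp
  show "goodV cv (\<lambda>x k. Inf {G_stage N alpha beta0 cv ch cb t W a k - cv * real_of_int x | a. x \<le> a})"
    unfolding Veq goodV_def
  proof (intro conjI allI)
    show "0 \<le> S.Vn x k" for x k by (rule S.Vn_nn)
    show "\<exists>A B C. A \<ge> 0 \<and> B \<ge> 0 \<and> C \<ge> 0 \<and> (\<forall>x k. S.Vn x k \<le> A + B * \<bar>real_of_int x\<bar> + C * real k)"
    proof (intro exI conjI allI)
      fix x k
      show "S.Vn x k \<le> (A + (ch + cb + (real N - 1) * C + B + C) * S.Q * alpha) + (ch + cb + B) * \<bar>real_of_int x\<bar>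
     + (C + (ch + cb + (real N - 1) * C + B + C) * S.Q) * real k"
        using S.Vn_le[of x k] S.Gs_le[of x k] by linarith
    qed (use ABC pos a0 N1 S.Q_nn in auto)
    show "\<exists>D \<ge> 0. \<forall>x k. -cv \<le> S.Vn (x+1) k - S.Vn x k \<and> S.Vn (x+1) k - S.Vn x k \<le> D"
    proof (intro exI[of _ "cv + ch + D"] conjI allI)
      fix x k
      show "-cv \<le> S.Vn (x+1) k - S.Vn x k" unfolding S.Vn_diff by simp
      show "S.Vn (x+1) k - S.Vn x k \<le> cv + ch + D" unfolding S.Vn_diff using S.DG_hi[of x k] pos D by simp
    qed (use pos D in simp)
    show "S.Vn (x+1) k - S.Vn x k \<le> S.Vn (x+1+1) k - S.Vn (x+1) k" for x k
      unfolding S.Vn_diff using S.DG_mono[of x k] by simp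
    show "S.Vn (x+1) (Suc k) - S.Vn x (Suc k) \<le> S.Vn (x+1) k - S.Vn x k" for x k
      unfolding S.Vn_diff using S.DG_anti[of x k] by simp
  qed
qed


lemma V_good:
  assumes "N \<ge> 1" "alpha0 > 0" "beta0 > 0" "cv > 0" "ch > 0" "cb > 0"
  shows "goodV cv (V_rem N T alpha0 beta0 cv ch cb m)"
proof (induction m)
  case 0
  have "V_rem N T alpha0 beta0 cv ch cb 0 = (\<lambda>x k. 0)" by (intro ext) simp
  then show ?case using goodV_zero[OF assms(4)] by simp
next
  case (Suc m)
  have "V_rem N T alpha0 beta0 cv ch cb (Suc m) = (\<lambda>x k. Inf {G_stage N alpha0 beta0 cv ch cb (T - Suc m) (V_rem N T alpha0 beta0 cv ch cb m) a k
            - cv * real_of_int x | a. x \<le> a})" by (intro ext) simp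
  then show ?case using step_lemma(2)[OF assms Suc.IH] by simp
qed

theorem proposition6:
  fixes N T :: nat and alpha0 beta0 :: real and cv ch cb :: "nat \<Rightarrow> real"
  assumes "N \<ge> 1" and "T \<ge> 1" and "alpha0 > 0" and "beta0 > 0"
    and "\<And>i. i \<in> {1..N} \<Longrightarrow> cv i > 0 \<and> ch i > 0 \<and> cb i > 0 \<and> cb i > cv i"
  shows "\<forall>t < T. \<forall>i \<in> {1..N}.
           (\<forall>a::int. antimono (\<lambda>k. Gfun N T alpha0 beta0 cv ch cb i t (a + 1) k
                                   - Gfun N T alpha0 beta0 cv ch cb i t a k))
         \<and> (\<forall>x::int. antimono (\<lambda>k. Vtil N T alpha0 beta0 cv ch cb i t (x + 1) k
                                   - Vtil N T alpha0 beta0 cv ch cb i t x k))"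
proof (intro allI impI ballI, rule conjI)
  fix t i assume t: "t < T" and i: "i \<in> {1..N}"
  have pos: "cv i > 0" "ch i > 0" "cb i > 0" using assms(5)[OF i] by auto
  have Veq: "Vtil N T alpha0 beta0 cv ch cb i (Suc t) = V_rem N T alpha0 beta0 (cv i) (ch i) (cb i) (T - Suc t)"
    by (intro ext) (simp add: Vtil_def)
  have g: "goodV (cv i) (V_rem N T alpha0 beta0 (cv i) (ch i) (cb i) (T - Suc t))"
    by (rule V_good[OF assms(1,3,4) pos])
  show "\<forall>a::int. antimono (\<lambda>k. Gfun N T alpha0 beta0 cv ch cb i t (a + 1) k - Gfun N T alpha0 beta0 cv ch cb i t a k)"
    unfolding Gfun_def Veq by (rule step_lemma(1)[OF assms(1,3,4) pos g])
  have g2: "goodV (cv i) (V_rem N T alpha0 beta0 (cv i) (ch i) (cb i) (T - t))"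
    by (rule V_good[OF assms(1,3,4) pos])
  show "\<forall>x::int. antimono (\<lambda>k. Vtil N T alpha0 beta0 cv ch cb i t (x + 1) k - Vtil N T alpha0 beta0 cv ch cb i t x k)"
  proof
    fix x :: int
    show "antimono (\<lambda>k. Vtil N T alpha0 beta0 cv ch cb i t (x + 1) k - Vtil N T alpha0 beta0 cv ch cb i t x k)"
      unfolding Vtil_def by (rule decseq_SucI) (use g2 in \<open>simp add: goodV_def\<close>)
  qed
qed

end
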